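(* Assume the refinement setting of the context, with $F(u)=u$, $G(u)=u$, $p\cap\overline{q}\subseteq F(p\cup q)$, $p\cap\overline{q}\subseteq\mathrm{grd}(G)$, $p\cap\overline{q}\subseteq G(q)$, and additionally $$r^{-1}[p\cap\overline{q}]\cap\mathrm{grd}(G')\subseteq F'(\mathrm{grd}(G'))\cap H(\mathrm{grd}(G')).$$ Let $p'=r^{-1}[p]$, $q'=r^{-1}[q]$, $a=p'\cap\mathrm{grd}(G')$ and $S'(s)=F'(s)\cap G'(s)\cap H(s)$. Then $a\cap\overline{q'}\subseteq S'(a\cup q')$ and $a\cap\overline{q'}\subseteq\mathrm{grd}(G')\cap G'(q')$; that is, the basic liveness property $G'\cdot\, a\gg_w q'$ holds in the concrete system $S'$.
   Context: Refinement setting: $u$ (abstract states) and $v$ (concrete states) are sets; $F,G$ are conjunctive set transformers on $u$ and $F',G',H$ conjunctive set transformers on $v$ (conjunctive = preserves intersections of nonempty families of subsets, hence monotone). $\mathrm{grd}(E)=\overline{E(\varnothing)}$. $r\subseteq v\times u$ is a total relation (every $y\in v$ is related to some $x\in u$). For $a\subseteq v$, $r[a]=\{x\in u\mid\exists y\in a,(y,x)\in r\}$; for $b\subseteq u$, $r^{-1}[b]=\{y\in v\mid\exists x\in b,(y,x)\in r\}$. Complements $\overline{\cdot}$ are taken in $u$ for subsets of $u$ and in $v$ for subsets of $v$. The refinement conditions are: for all $s\subseteq v$, $F(\overline{r[\overline{s}]})\subseteq\overline{r[\overline{F'(s)}]}$, $G(\overline{r[\overline{s}]})\subseteq\overline{r[\overline{G'(s)}]}$,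 and $\overline{r[\overline{s}]}\subseteq\overline{r[\overline{H(s)}]}$. $p,q\subseteq u$. In a system $S$ (choice of its events, $S(s)=\bigcap_i E_i(s)$), the basic liveness property (ensures) $G\cdot a\gg_w b$ for a helpful event $G$ (choice of a nonempty subfamily of the events) means $a\cap\overline{b}\subseteq S(a\cup b)$ and $a\cap\overline{b}\subseteq\mathrm{grd}(G)\cap G(b)$. *)

theory Defs
  imports Main
begin

text \<open>Set transformers on a carrier set u (subsets of u to subsets of u),
  complements taken relative to the carrier.\<close>

definition transformer_on :: "'a set \<Rightarrow> ('a set \<Rightarrow> 'a set) \<Rightarrow> bool" where
  "transformer_on u E \<longleftrightarrow> (\<forall>s \<subseteq> u. E s \<subseteq> u)"

definition conjunctive_on :: "'a set \<Rightarrow> ('a set \<Rightarrow> 'a set) \<Rightarrow> bool" where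
  "conjunctive_on u E \<longleftrightarrow> transformer_on u E \<and>
     (\<forall>X. X \<noteq> {} \<longrightarrow> (\<forall>s\<in>X. s \<subseteq> u) \<longrightarrow> E (\<Inter>X) = (\<Inter>s\<in>X. E s))"

definition grd :: "'a set \<Rightarrow> ('a set \<Rightarrow> 'a set) \<Rightarrow> 'a set" where
  "grd u E = u - E {}"

definition image_rel :: "('b \<times> 'a) set \<Rightarrow> 'b set \<Rightarrow> 'a set" where
  "image_rel r a = {x. \<exists>y\<in>a. (y, x) \<in> r}"

definition preimage_rel :: "('b \<times> 'a) set \<Rightarrow> 'a set \<Rightarrow> 'b set" where
  "preimage_rel r b = {y. \<exists>x\<in>b. (y, x) \<in> r}"

definition total_rel_on :: "'b set \<Rightarrow> 'a set \<Rightarrow> ('b \<times> 'a) set \<Rightarrow> bool" where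
  "total_rel_on v u r \<longleftrightarrow> r \<subseteq> v \<times> u \<and> (\<forall>y\<in>v. \<exists>x\<in>u. (y, x) \<in> r)"

definition ensures_w :: "'a set \<Rightarrow> ('a set \<Rightarrow> 'a set) \<Rightarrow> ('a set \<Rightarrow> 'a set) \<Rightarrow> 'a set \<Rightarrow> 'a set \<Rightarrow> bool" where
  "ensures_w u S G a b \<longleftrightarrow> a \<inter> (u - b) \<subseteq> S (a \<union> b) \<and> a \<inter> (u - b) \<subseteq> grd u G \<inter> G b"

end

theory Submission
  imports Defs
begin

lemma conj_inter:
  assumes "conjunctive_on u E" "s \<subseteq> u" "t \<subseteq> u"
  shows "E (s \<inter> t) = E s \<inter> E t"
proof -
  have c: "\<forall>X. X \<noteq> {} \<longrightarrow> (\<forall>s\<in>X. s \<subseteq> u) \<longrightarrow> E (\<Inter>X) = (\<Inter>s\<in>X. E s)"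
    using assms(1) unfolding conjunctive_on_def by (rule conjunct2)
  have "E (\<Inter>{s,t}) = (\<Inter>x\<in>{s,t}. E x)"
    by (rule c[rule_format]) (use assms in auto)
  thus ?thesis by simp
qed

lemma conj_mono:
  assumes "conjunctive_on u E" "s \<subseteq> t" "t \<subseteq> u"
  shows "E s \<subseteq> E t"
proof -
  have "s \<subseteq> u" using assms(2,3) by (rule order_trans)
  hence "E (s \<inter> t) = E s \<inter> E t" using conj_inter[OF assms(1)] assms(3) by simp
  moreover have "s \<inter> t = s" using assms(2) by (rule Int_absorb2)
  ultimately show ?thesis by (metis Int_lower2)
qed

theorem lemma6:
  fixes u :: "'a set" and v :: "'b set" and r :: "('b \<times> 'a) set"
    and F G :: "'a set \<Rightarrow> 'a set" and F' G' H :: "'b set \<Rightarrow> 'b set"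
    and p q :: "'a set"
  assumes cF: "conjunctive_on u F" and cG: "conjunctive_on u G"
    and cF': "conjunctive_on v F'" and cG': "conjunctive_on v G'" and cH: "conjunctive_on v H"
    and rtot: "total_rel_on v u r"
    and refF: "\<forall>s \<subseteq> v. F (u - image_rel r (v - s)) \<subseteq> u - image_rel r (v - F' s)"
    and refG: "\<forall>s \<subseteq> v. G (u - image_rel r (v - s)) \<subseteq> u - image_rel r (v - G' s)"
    and refH: "\<forall>s \<subseteq> v. u - image_rel r (v - s) \<subseteq> u - image_rel r (v - H s)"
    and pu: "p \<subseteq> u" and qu: "q \<subseteq> u"
    and Fu: "F u = u" and Gu: "G u = u"
    and h1: "p \<inter> (u - q) \<subseteq> F (p \<union> q)"
    and h2: "p \<inter> (u - q) \<subseteq> grd u G"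
    and h3: "p \<inter> (u - q) \<subseteq> G q"
    and h4: "preimage_rel r (p \<inter> (u - q)) \<inter> grd v G' \<subseteq> F' (grd v G') \<inter> H (grd v G')"
  shows "let p' = preimage_rel r p; q' = preimage_rel r q; a = p' \<inter> grd v G';
             S' = (\<lambda>s. F' s \<inter> G' s \<inter> H s)
         in a \<inter> (v - q') \<subseteq> S' (a \<union> q') \<and> a \<inter> (v - q') \<subseteq> grd v G' \<inter> G' q'
            \<and> ensures_w v S' G' a q'"
proof -
  define p' where "p' = preimage_rel r p"
  define q' where "q' = preimage_rel r q"
  define g where "g = grd v G'"
  define a where "a = p' \<inter> g"
  have rv: "r \<subseteq> v \<times> u" using rtot unfolding total_rel_on_def by blast
  have p'v: "p' \<subseteq> v" using rv unfolding p'_def preimage_rel_def by blast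
  have q'v: "q' \<subseteq> v" using rv unfolding q'_def preimage_rel_def by blast
  have gv: "g \<subseteq> v" unfolding g_def grd_def by blast
  have av: "a \<subseteq> v" using p'v unfolding a_def by blast
  have w_q: "q \<subseteq> u - image_rel r (v - q')"
    using qu unfolding q'_def image_rel_def preimage_rel_def by blast
  have w_pq: "p \<union> q \<subseteq> u - image_rel r (v - (p' \<union> q'))"
    using pu qu unfolding p'_def q'_def image_rel_def preimage_rel_def by blast
  have key: "y \<in> G' q' \<and> y \<in> F' (p' \<union> q') \<and> y \<in> H (p' \<union> q') \<and> y \<in> F' g \<and> y \<in> H g"
    if y: "y \<in> a \<inter> (v - q')" for y
  proof -
    obtain x where x: "x \<in> p" "(y, x) \<in> r" using y unfolding a_def p'_def preimage_rel_def by blast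
    have xq: "x \<notin> q" using y x unfolding q'_def preimage_rel_def by blast
    have xpq: "x \<in> p \<inter> (u - q)" using x xq pu by blast
    have yv: "y \<in> v" using y by blast
    have "x \<in> G q" using h3 xpq by blast
    also have "G q \<subseteq> G (u - image_rel r (v - q'))" by (rule conj_mono[OF cG w_q]) blast
    also have "\<dots> \<subseteq> u - image_rel r (v - G' q')" using refG q'v by blast
    finally have 1: "y \<in> G' q'" using x yv unfolding image_rel_def by blast
    have "x \<in> F (p \<union> q)" using h1 xpq by blast
    also have "F (p \<union> q) \<subseteq> F (u - image_rel r (v - (p' \<union> q')))" by (rule conj_mono[OF cF w_pq]) blast
    also have "\<dots> \<subseteq> u - image_rel r (v - F' (p' \<union> q'))" using refF p'v q'v by blast
    finally have 2: "y \<in> F' (p' \<union> q')" using x yv unfolding image_rel_def by blast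
    have "x \<in> u - image_rel r (v - (p' \<union> q'))" using w_pq x by blast
    also have "\<dots> \<subseteq> u - image_rel r (v - H (p' \<union> q'))" using refH p'v q'v by blast
    finally have 3: "y \<in> H (p' \<union> q')" using x yv unfolding image_rel_def by blast
    have "y \<in> preimage_rel r (p \<inter> (u - q)) \<inter> grd v G'"
      using xpq x y unfolding preimage_rel_def a_def g_def by blast
    hence "y \<in> F' g \<and> y \<in> H g" using h4 unfolding g_def by blast
    thus ?thesis using 1 2 3 by blast
  qed
  have eqs: "(p' \<union> q') \<inter> g \<subseteq> a \<union> q'" unfolding a_def by blast
  have sub: "(p' \<union> q') \<inter> g \<subseteq> v" "a \<union> q' \<subseteq> v" using gv av q'v by blast+
  have A: "a \<inter> (v - q') \<subseteq> F' (a \<union> q') \<inter> G' (a \<union> q') \<inter> H (a \<union> q')"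
  proof
    fix y assume y: "y \<in> a \<inter> (v - q')"
    note k = key[OF y]
    have "y \<in> F' ((p' \<union> q') \<inter> g)" using k conj_inter[OF cF', of "p' \<union> q'" g] p'v q'v gv by blast
    hence f: "y \<in> F' (a \<union> q')" using conj_mono[OF cF' eqs sub(2)] by blast
    have "y \<in> H ((p' \<union> q') \<inter> g)" using k conj_inter[OF cH, of "p' \<union> q'" g] p'v q'v gv by blast
    hence h: "y \<in> H (a \<union> q')" using conj_mono[OF cH eqs sub(2)] by blast
    have "y \<in> G' (a \<union> q')" using k conj_mono[OF cG', of q' "a \<union> q'"] sub(2) by blast
    thus "y \<in> F' (a \<union> q') \<inter> G' (a \<union> q') \<inter> H (a \<union> q')" using f h by blast
  qed
  have B: "a \<inter> (v - q') \<subseteq> grd v G' \<inter> G' q'"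
    using key unfolding a_def g_def by blast
  show ?thesis using A B unfolding Let_def ensures_w_def p'_def[symmetric] q'_def[symmetric]
    g_def[symmetric] a_def[symmetric] by simp
qed

end
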